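(* Let $G$ be a connected chordal graph with at least two vertices. A vertex $v\in V(G)$ is an $\mathcal{F}$-branch leaf of some perfect elimination ordering of $G$ if and only if the induced subgraph $G[N_G(v)]$ has a dominating clique.
   Context: Graphs are finite, simple, undirected; $N_G(v)$ is the open neighborhood of $v$. A graph is chordal if it has no induced cycle of length at least 4. A clique $C$ of a graph $H$ is dominating if every vertex of $H$ is in $C$ or has a neighbor in $C$. A vertex ordering $\sigma$ of $G$ (a bijection $\{1,\dots,n\}\to V(G)$, with $u\prec_\sigma w$ meaning $u$ comes before $w$) is a perfect elimination ordering (PEO) if for every vertex $v$ the neighbors of $v$ that precede $v$ in $\sigma$ form a clique. For an ordering $\sigma$ of a connected graph in which every vertex other than $\sigma(1)$ has a neighbor to its left (as is the case for PEOs of connected chordal graphs), the $\mathcal{F}$-tree of $\sigma$ is the spanning tree containing, for each $v\neq\sigma(1)$, the edge from $v$ to its leftmost neighbor in $\sigma$. A vertex $v\neq\sigma(1)$ that is a leaf of the $\mathcal{F}$-tree is an $\mathcal{F}$-branch leaf of $\sigma$. *)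

theory Defs
  imports Main
begin

definition graph :: "'a set \<Rightarrow> ('a \<Rightarrow> 'a \<Rightarrow> bool) \<Rightarrow> bool" where
  "graph V E \<longleftrightarrow> finite V \<and> (\<forall>u w. E u w \<longrightarrow> u \<in> V \<and> w \<in> V)
     \<and> (\<forall>u w. E u w \<longrightarrow> E w u) \<and> (\<forall>u. \<not> E u u)"

definition connected_graph :: "'a set \<Rightarrow> ('a \<Rightarrow> 'a \<Rightarrow> bool) \<Rightarrow> bool" where
  "connected_graph V E \<longleftrightarrow> (\<forall>u\<in>V. \<forall>w\<in>V. E\<^sup>*\<^sup>* u w)"

definition induced_cycle :: "'a set \<Rightarrow> ('a \<Rightarrow> 'a \<Rightarrow> bool) \<Rightarrow> 'a list \<Rightarrow> bool" where
  "induced_cycle V E cs \<longleftrightarrow> distinct cs \<and> set cs \<subseteq> V \<and> length cs \<ge> 3 \<and>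
     (\<forall>i < length cs. \<forall>j < length cs. i \<noteq> j \<longrightarrow>
        (E (cs ! i) (cs ! j) \<longleftrightarrow> j = Suc i mod length cs \<or> i = Suc j mod length cs))"

definition chordal :: "'a set \<Rightarrow> ('a \<Rightarrow> 'a \<Rightarrow> bool) \<Rightarrow> bool" where
  "chordal V E \<longleftrightarrow> \<not> (\<exists>cs. induced_cycle V E cs \<and> length cs \<ge> 4)"

definition nbhd :: "('a \<Rightarrow> 'a \<Rightarrow> bool) \<Rightarrow> 'a \<Rightarrow> 'a set" where
  "nbhd E v = {u. E v u}"

definition is_clique :: "('a \<Rightarrow> 'a \<Rightarrow> bool) \<Rightarrow> 'a set \<Rightarrow> bool" where
  "is_clique E C \<longleftrightarrow> (\<forall>x\<in>C. \<forall>y\<in>C. x \<noteq> y \<longrightarrow> E x y)"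

definition dominating_clique :: "'a set \<Rightarrow> ('a \<Rightarrow> 'a \<Rightarrow> bool) \<Rightarrow> 'a set \<Rightarrow> bool" where
  "dominating_clique W E C \<longleftrightarrow> C \<subseteq> W \<and> is_clique E C \<and>
     (\<forall>w\<in>W. w \<in> C \<or> (\<exists>c\<in>C. E w c))"

definition has_dominating_clique :: "'a set \<Rightarrow> ('a \<Rightarrow> 'a \<Rightarrow> bool) \<Rightarrow> bool" where
  "has_dominating_clique W E \<longleftrightarrow> (\<exists>C. dominating_clique W E C)"

definition vertex_ordering :: "'a set \<Rightarrow> (nat \<Rightarrow> 'a) \<Rightarrow> bool" where
  "vertex_ordering V \<sigma> \<longleftrightarrow> bij_betw \<sigma> {1..card V} V"

definition peo :: "'a set \<Rightarrow> ('a \<Rightarrow> 'a \<Rightarrow> bool) \<Rightarrow> (nat \<Rightarrow> 'a) \<Rightarrow> bool" where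
  "peo V E \<sigma> \<longleftrightarrow> vertex_ordering V \<sigma> \<and>
     (\<forall>i\<in>{1..card V}. is_clique E {\<sigma> j | j. j \<in> {1..card V} \<and> j < i \<and> E (\<sigma> i) (\<sigma> j)})"

definition leftmost_nbr :: "'a set \<Rightarrow> ('a \<Rightarrow> 'a \<Rightarrow> bool) \<Rightarrow> (nat \<Rightarrow> 'a) \<Rightarrow> 'a \<Rightarrow> 'a" where
  "leftmost_nbr V E \<sigma> w = \<sigma> (LEAST j. j \<in> {1..card V} \<and> E w (\<sigma> j))"

definition F_tree_edges :: "'a set \<Rightarrow> ('a \<Rightarrow> 'a \<Rightarrow> bool) \<Rightarrow> (nat \<Rightarrow> 'a) \<Rightarrow> 'a set set" where
  "F_tree_edges V E \<sigma> = {{w, leftmost_nbr V E \<sigma> w} | w. w \<in> V \<and> w \<noteq> \<sigma> 1}"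

definition F_branch_leaf :: "'a set \<Rightarrow> ('a \<Rightarrow> 'a \<Rightarrow> bool) \<Rightarrow> (nat \<Rightarrow> 'a) \<Rightarrow> 'a \<Rightarrow> bool" where
  "F_branch_leaf V E \<sigma> v \<longleftrightarrow> v \<in> V \<and> v \<noteq> \<sigma> 1 \<and>
     card {e \<in> F_tree_edges V E \<sigma>. v \<in> e} = 1"

end

theory Submission
  imports Defs
begin



definition res :: "'a set \<Rightarrow> ('a \<Rightarrow> 'a \<Rightarrow> bool) \<Rightarrow> 'a \<Rightarrow> 'a \<Rightarrow> bool" where
  "res W E = (\<lambda>u w. E u w \<and> u \<in> W \<and> w \<in> W)"

lemma graph_res: "graph V E \<Longrightarrow> W \<subseteq> V \<Longrightarrow> graph W (res W E)"
  unfolding graph_def res_def by (auto intro: finite_subset)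

lemma chordal_res: assumes "chordal V E" "W \<subseteq> V" shows "chordal W (res W E)"
proof -
  have "induced_cycle V E cs" if "induced_cycle W (res W E) cs" for cs
  proof -
    have s: "set cs \<subseteq> W" using that unfolding induced_cycle_def by auto
    have "\<forall>i < length cs. \<forall>j < length cs. res W E (cs ! i) (cs ! j) = E (cs ! i) (cs ! j)"
      using s nth_mem unfolding res_def by blast
    then show ?thesis using that assms(2) s unfolding induced_cycle_def by auto
  qed
  then show ?thesis using assms(1) unfolding chordal_def by blast
qed

lemma walk_of_rtranclp:
  assumes "R\<^sup>*\<^sup>* u w"
  shows "\<exists>n q. q 0 = u \<and> q n = w \<and> (\<forall>m<n. R (q m) (q (Suc m)))"
  using assms
proof (induction rule: rtranclp_induct)
  case base
  then show ?case by (rule exI[of _ 0]) auto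
next
  case (step y z)
  then obtain n q where q: "q 0 = u" "q n = y" "\<forall>m<n. R (q m) (q (Suc m))" by blast
  show ?case
    apply (rule exI[of _ "Suc n"], rule exI[of _ "q(Suc n := z)"])
    using q step(2) by (auto simp: less_Suc_eq)
qed

lemma clique_subset: "is_clique E C \<Longrightarrow> D \<subseteq> C \<Longrightarrow> is_clique E D"
  unfolding is_clique_def by blast

definition ipath :: "('a \<Rightarrow> 'a \<Rightarrow> bool) \<Rightarrow> 'a set \<Rightarrow> 'a \<Rightarrow> 'a \<Rightarrow> nat \<Rightarrow> (nat \<Rightarrow> 'a) \<Rightarrow> bool" where
  "ipath E B x y k p \<longleftrightarrow> p 0 = x \<and> p k = y \<and> (\<forall>m<k. E (p m) (p (Suc m))) \<and>
     (\<forall>m. 0 < m \<and> m < k \<longrightarrow> p m \<in> B)"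

lemma ipath_skip:
  assumes "ipath E B x y k p" "j < l" "l \<le> k" "E (p j) (p l)"
  shows "ipath E B x y (k - (l - j) + 1) (\<lambda>m. if m \<le> j then p m else p (m + (l - j - 1)))"
proof -
  have st: "E (p m) (p (Suc m))" if "m < k" for m using assms(1) that unfolding ipath_def by blast
  have int: "p m \<in> B" if "0 < m" "m < k" for m using assms(1) that unfolding ipath_def by blast
  show ?thesis unfolding ipath_def
  proof (intro conjI allI impI)
    show "(if 0 \<le> j then p 0 else p (0 + (l - j - 1))) = x" using assms(1) unfolding ipath_def by simp
    show "(if k - (l - j) + 1 \<le> j then p (k - (l - j) + 1) else p (k - (l - j) + 1 + (l - j - 1))) = y"
      using assms(1-3) unfolding ipath_def by auto
  next
    fix m assume m: "m < k - (l - j) + 1"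
    show "E (if m \<le> j then p m else p (m + (l - j - 1)))
          (if Suc m \<le> j then p (Suc m) else p (Suc m + (l - j - 1)))"
    proof (cases "m < j")
      case True then show ?thesis using st[of m] assms by auto
    next
      case False
      show ?thesis
      proof (cases "m = j")
        case True then show ?thesis using assms(2,4) by auto
      next
        case False
        then have "m > j" using \<open>\<not> m < j\<close> by auto
        then show ?thesis using st[of "m + (l - j - 1)"] m assms(2,3) by auto
      qed
    qed
  next
    fix m assume m: "0 < m \<and> m < k - (l - j) + 1"
    show "(if m \<le> j then p m else p (m + (l - j - 1))) \<in> B"
      using int[of m] int[of "m + (l - j - 1)"] m assms(2,3) by auto
  qed
qed




lemma Suc_mod_eq: "i < n \<Longrightarrow> Suc i mod n = (if Suc i = n then 0 else Suc i)"
  by auto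

lemma cycle_contra:
  assumes g: "graph V E" and ch: "chordal V E" and aV: "a \<in> V" and BV: "B \<subseteq> V" and aB: "a \<notin> B"
    and naB: "\<forall>z\<in>B. \<not> E a z" and ax: "E a x" and ay: "E a y" and xB: "x \<notin> B" and yB: "y \<notin> B"
    and xy: "x \<noteq> y" and nxy: "\<not> E x y" and p0: "ipath E B x y k0 p0"
  shows False
proof -
  have sym: "E u w \<Longrightarrow> E w u" for u w using g unfolding graph_def by blast
  have irr: "\<not> E u u" for u using g unfolding graph_def by blast
  have inV: "E u w \<Longrightarrow> u \<in> V \<and> w \<in> V" for u w using g unfolding graph_def by blast
  define k where "k = (LEAST k. \<exists>p. ipath E B x y k p)"
  have "\<exists>p. ipath E B x y k p" unfolding k_def by (rule LeastI[of _ k0]) (use p0 in blast)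
  then obtain p where p: "ipath E B x y k p" by blast
  have kmin: "\<And>k' p'. ipath E B x y k' p' \<Longrightarrow> k \<le> k'" unfolding k_def by (blast intro: Least_le)
  have p0x: "p 0 = x" and pky: "p k = y" and st: "\<And>m. m < k \<Longrightarrow> E (p m) (p (Suc m))"
    and int: "\<And>m. 0 < m \<Longrightarrow> m < k \<Longrightarrow> p m \<in> B" using p unfolding ipath_def by auto
  have C1: "\<not> E (p j) (p l)" if "j < l" "l \<le> k" "Suc j < l" for j l
  proof
    assume "E (p j) (p l)"
    from ipath_skip[OF p that(1,2) this] have "k \<le> k - (l - j) + 1" by (rule kmin)
    with that show False by auto
  qed
  have k2: "k \<ge> 2"
  proof (rule ccontr)
    assume "\<not> k \<ge> 2"
    then have "k = 0 \<or> k = 1" by auto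
    then show False using p0x pky xy nxy st[of 0] by auto
  qed
  have C2: "p j \<noteq> p l" if "j < l" "l \<le> k" for j l
  proof
    assume eq: "p j = p l"
    show False
    proof (cases "l < k")
      case True
      have "E (p j) (p (Suc l))" using st[OF True] eq by simp
      then show False using C1[of j "Suc l"] that True by auto
    next
      case False
      then have "l = k" using that by auto
      then have "p j = y" using eq pky by simp
      show False
      proof (cases "j = 0")
        case True then show False using \<open>p j = y\<close> p0x xy by simp
      next
        case False then have "p j \<in> B" using int that \<open>l = k\<close> by auto
        then show False using \<open>p j = y\<close> yB by simp
      qed
    qed
  qed
  have pV: "p m \<in> V" if "m \<le> k" for m
  proof (cases "m < k")
    case True then show ?thesis using st[OF True] inV by blast
  next
    case False then have "m = k" using that by auto
    then show ?thesis using pky inV[OF ay] by simp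
  qed
  have apm: "E a (p m) \<longleftrightarrow> m = 0 \<or> m = k" if "m \<le> k" for m
  proof (cases "m = 0 \<or> m = k")
    case True then show ?thesis using ax ay p0x pky by auto
  next
    case False then show ?thesis using int[of m] naB that by auto
  qed
  have ppE: "E (p i) (p j) \<longleftrightarrow> j = Suc i \<or> i = Suc j" if "i \<le> k" "j \<le> k" for i j
  proof -
    consider "i < j" | "i = j" | "j < i" by linarith
    then show ?thesis
    proof cases
      case 1
      then show ?thesis using C1[of i j] st[of i] that by (cases "j = Suc i") auto
    next
      case 2 then show ?thesis using irr by auto
    next
      case 3
      then show ?thesis using C1[of j i] st[of j] that sym by (cases "i = Suc j") auto
    qed
  qed
  define cs where "cs = a # map p [0..<Suc k]"
  have len: "length cs = k + 2" unfolding cs_def by simp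
  have cs0: "cs ! 0 = a" unfolding cs_def by simp
  have csS: "cs ! Suc i = p i" if "i \<le> k" for i
    unfolding cs_def using that by (simp del: upt_Suc add: nth_map_upt)
  have "induced_cycle V E cs"
    unfolding induced_cycle_def
  proof (intro conjI allI impI)
    have "inj_on p {0..<Suc k}"
      unfolding inj_on_def
    proof (intro ballI impI)
      fix i j assume "i \<in> {0..<Suc k}" "j \<in> {0..<Suc k}" "p i = p j"
      then show "i = j" using C2[of i j] C2[of j i] by (cases i j rule: linorder_cases) auto
    qed
    moreover have "a \<notin> p ` {0..<Suc k}" 
    proof
      assume "a \<in> p ` {0..<Suc k}"
      then obtain m where "m < Suc k" "p m = a" by auto
      then show False using apm[of m] irr int[of m] aB by auto
    qed
    ultimately show "distinct cs" unfolding cs_def by (simp add: distinct_map del: upt_Suc)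
    show "set cs \<subseteq> V" unfolding cs_def using aV pV by (auto simp del: upt_Suc)
    show "3 \<le> length cs" using len k2 by simp
  next
    fix i j assume i: "i < length cs" and j: "j < length cs" and ij: "i \<noteq> j"
    show "E (cs ! i) (cs ! j) = (j = Suc i mod length cs \<or> i = Suc j mod length cs)"
    proof (cases i)
      case 0
      then obtain j' where j': "j = Suc j'" "j' \<le> k" using ij j len by (cases j) auto
      have e1: "Suc 0 mod (k + 2) = 1" using k2 by simp
      have e2: "(0 = Suc (Suc j') mod (k + 2)) = (j' = k)" using j'(2) by (subst Suc_mod_eq) auto
      show ?thesis using 0 j' cs0 csS[OF j'(2)] apm[OF j'(2)] len e1 e2 by simp
    next
      case (Suc i')
      then have i': "i' \<le> k" using i len by simp
      show ?thesis
      proof (cases j)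
        case 0
        have e1: "Suc 0 mod (k + 2) = 1" using k2 by simp
        have e2: "(0 = Suc (Suc i') mod (k + 2)) = (i' = k)" using i' by (subst Suc_mod_eq) auto
        have "E (p i') a = E a (p i')" using sym by blast
        then show ?thesis using \<open>j = 0\<close> \<open>i = Suc i'\<close> cs0 csS[OF i'] apm[OF i'] len e1 e2 by auto
      next
        case (Suc j')
        then have j': "j' \<le> k" using j len by simp
        have e1: "(Suc j' = Suc (Suc i') mod (k + 2)) = (j' = Suc i')"
          using i' j' by (subst Suc_mod_eq) auto
        have e2: "(Suc i' = Suc (Suc j') mod (k + 2)) = (i' = Suc j')"
          using i' j' by (subst Suc_mod_eq) auto
        show ?thesis using \<open>i = Suc i'\<close> Suc csS[OF i'] csS[OF j'] ppE[OF i' j'] len e1 e2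
          by simp
      qed
    qed
  qed
  moreover have "length cs \<ge> 4" using len k2 by simp
  ultimately show False using ch unfolding chordal_def by blast
qed




lemma simplicial_exists:
  "graph V E \<Longrightarrow> chordal V E \<Longrightarrow> is_clique E K \<Longrightarrow> K \<subseteq> V \<Longrightarrow> K \<noteq> V \<Longrightarrow>
   \<exists>x \<in> V - K. is_clique E (nbhd E x)"
proof (induction "card V" arbitrary: V E K rule: less_induct)
  case less
  note g = less.prems(1) and ch = less.prems(2) and Kc = less.prems(3) and KV = less.prems(4)
    and KnV = less.prems(5)
  have fin: "finite V" using g unfolding graph_def by blast
  have sym: "E u w \<Longrightarrow> E w u" for u w using g unfolding graph_def by blast
  have irr: "\<not> E u u" for u using g unfolding graph_def by blast
  have inV: "E u w \<Longrightarrow> u \<in> V \<and> w \<in> V" for u w using g unfolding graph_def by blast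
  have sep: "\<exists>x \<in> V - K. is_clique E (nbhd E x)"
    if VX: "V = X \<union> S \<union> Y" and d1: "X \<inter> S = {}" and d2: "X \<inter> Y = {}" and d3: "S \<inter> Y = {}"
      and Xne: "X \<noteq> {}" and Yne: "Y \<noteq> {}" and noE: "\<forall>u\<in>X. \<forall>w\<in>Y. \<not> E u w"
      and Sc: "is_clique E S" and KX: "K \<inter> X = {}" for X S Y
  proof -
    define W where "W = X \<union> S"
    have WV: "W \<subseteq> V" using VX unfolding W_def by blast
    have "b \<notin> W" if "b \<in> Y" for b using that d2 d3 unfolding W_def by blast
    then have "W \<noteq> V" using Yne VX by blast
    then have "W \<subset> V" using WV by blast
    then have cW: "card W < card V" using fin by (simp add: psubset_card_mono)
    have Sc': "is_clique (res W E) S" using Sc unfolding is_clique_def res_def W_def by blast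
    have SW: "S \<subseteq> W" unfolding W_def by blast
    have "S \<noteq> W" using Xne d1 unfolding W_def by blast
    from less.hyps[OF cW graph_res[OF g WV] chordal_res[OF ch WV] Sc' SW this]
    obtain x where x: "x \<in> W - S" "is_clique (res W E) (nbhd (res W E) x)" by blast
    have xX: "x \<in> X" using x(1) W_def by blast
    have nW: "nbhd E x \<subseteq> W"
    proof
      fix w assume "w \<in> nbhd E x"
      then have "E x w" unfolding nbhd_def by simp
      then have "w \<in> V" "w \<notin> Y" using inV noE xX by blast+
      then show "w \<in> W" using VX unfolding W_def by blast
    qed
    have xW: "x \<in> W" using x(1) by blast
    have "res W E x = E x" using xW nW unfolding res_def nbhd_def by (auto simp: fun_eq_iff)
    then have "nbhd (res W E) x = nbhd E x" unfolding nbhd_def by simp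
    then have cl: "is_clique (res W E) (nbhd E x)" using x(2) by simp
    have "is_clique E (nbhd E x)" unfolding is_clique_def
    proof (intro ballI impI)
      fix u w assume "u \<in> nbhd E x" "w \<in> nbhd E x" "u \<noteq> w"
      then have "res W E u w" using cl unfolding is_clique_def by blast
      then show "E u w" unfolding res_def by simp
    qed
    moreover have "x \<notin> K" using KX xX by auto
    ultimately show ?thesis using xX VX by auto
  qed
  show ?case
  proof (cases "\<forall>u\<in>V. \<forall>w\<in>V. u \<noteq> w \<longrightarrow> E u w")
    case True
    obtain x where "x \<in> V - K" using KV KnV by auto
    moreover have "is_clique E (nbhd E x)" using True inV unfolding is_clique_def nbhd_def by blast
    ultimately show ?thesis by blast
  next
    case False
    then obtain a b where ab: "a \<in> V" "b \<in> V" "a \<noteq> b" "\<not> E a b" by blast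
    define W0 where "W0 = V - {a} - nbhd E a"
    define B where "B = {z. (res W0 E)\<^sup>*\<^sup>* b z}"
    define S where "S = {s \<in> V - B. \<exists>y\<in>B. E s y}"
    define A where "A = V - S - B"
    have bW: "b \<in> W0" using ab unfolding W0_def nbhd_def by auto
    have BW: "B \<subseteq> W0"
    proof
      fix z assume "z \<in> B"
      then have "(res W0 E)\<^sup>*\<^sup>* b z" unfolding B_def by simp
      then show "z \<in> W0" using bW by (cases rule: rtranclp.cases) (auto simp: res_def)
    qed
    have bB: "b \<in> B" unfolding B_def by simp
    have clos: "z \<in> B" if "y \<in> B" "z \<in> W0" "E y z" for y z
    proof -
      have "res W0 E y z" using that BW unfolding res_def by auto
      then show ?thesis using that(1) unfolding B_def by (auto intro: rtranclp.rtrancl_into_rtrancl)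
    qed
    have W0V: "W0 \<subseteq> V" unfolding W0_def by auto
    have naB: "\<forall>z\<in>B. \<not> E a z" using BW by (auto simp: W0_def nbhd_def)
    have aB: "a \<notin> B" using BW by (auto simp: W0_def)
    have Sa: "E a s" if sS: "s \<in> S" for s
    proof -
      obtain y where y: "y \<in> B" "E s y" "s \<in> V" "s \<notin> B" using sS[unfolded S_def] by blast
      have "s \<notin> W0" using clos[of y s] y sym[OF y(2)] by blast
      moreover have "s \<noteq> a" using y naB by auto
      ultimately show ?thesis using y(3) unfolding W0_def nbhd_def by auto
    qed
    have aA: "a \<in> A" using Sa irr aB ab(1) unfolding A_def by blast
    have noE: "\<forall>u\<in>A. \<forall>w\<in>B. \<not> E u w" unfolding A_def S_def by blast
    have SV: "S \<subseteq> V" unfolding S_def by auto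
    have Sc: "is_clique E S"
      unfolding is_clique_def
    proof (intro ballI impI)
      fix x y assume xS: "x \<in> S" and yS: "y \<in> S" and xy: "x \<noteq> y"
      show "E x y"
      proof (rule ccontr)
        assume nxy: "\<not> E x y"
        obtain xb where xb: "xb \<in> B" "E x xb" using xS by (auto simp: S_def)
        obtain yb where yb: "yb \<in> B" "E y yb" using yS by (auto simp: S_def)
        have sr: "symp (res W0 E)" unfolding symp_def res_def using sym by blast
        have "(res W0 E)\<^sup>*\<^sup>* xb b" 
        proof -
          have "(res W0 E)\<^sup>*\<^sup>* b xb" using xb(1) by (simp add: B_def)
          then show ?thesis using symp_rtranclp[OF sr] by (simp add: sympD)
        qed
        moreover have "(res W0 E)\<^sup>*\<^sup>* b yb" using yb(1) by (simp add: B_def)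
        ultimately have "(res W0 E)\<^sup>*\<^sup>* xb yb" by simp
        then obtain n q where q: "q 0 = xb" "q n = yb" "\<forall>m<n. res W0 E (q m) (q (Suc m))"
          using walk_of_rtranclp[of "res W0 E" xb yb] by blast
        have qB: "q m \<in> B" if "m \<le> n" for m
          using that
        proof (induction m)
          case 0 then show ?case using q xb by simp
        next
          case (Suc m)
          then have "q m \<in> B" "res W0 E (q m) (q (Suc m))" using q(3) by auto
          then show ?case using clos unfolding res_def by blast
        qed
        define p where "p = (\<lambda>m. if m = 0 then x else if m \<le> n + 1 then q (m - 1) else y)"
        have "ipath E B x y (n + 2) p"
          unfolding ipath_def
        proof (intro conjI allI impI)
          show "p 0 = x" unfolding p_def by simp
          show "p (n + 2) = y" unfolding p_def by simp
        next
          fix m assume m: "m < n + 2"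
          consider "m = 0" | "0 < m" "m \<le> n" | "m = n + 1" using m by linarith
          then show "E (p m) (p (Suc m))"
          proof cases
            case 1 then show ?thesis using xb q unfolding p_def by simp
          next
            case 2
            then have "res W0 E (q (m - 1)) (q m)" using q(3)[rule_format, of "m - 1"] by simp
            then show ?thesis using 2 unfolding p_def res_def by simp
          next
            case 3 then show ?thesis using yb q sym unfolding p_def by simp
          qed
        next
          fix m assume "0 < m \<and> m < n + 2"
          then show "p m \<in> B" using qB[of "m - 1"] unfolding p_def by auto
        qed
        moreover have "x \<notin> B" "y \<notin> B" using xS yS by (auto simp: S_def)
        ultimately show False
          using cycle_contra[OF g ch ab(1) order.trans[OF BW W0V] aB naB Sa[OF xS] Sa[OF yS] _ _ xy nxy]
          by blast
      qed
    qed
    have VU: "V = A \<union> S \<union> B" using SV BW W0V unfolding A_def by auto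
    have "K \<inter> A = {} \<or> K \<inter> B = {}"
    proof (rule ccontr)
      assume "\<not> (K \<inter> A = {} \<or> K \<inter> B = {})"
      then obtain u w where "u \<in> K \<inter> A" "w \<in> K \<inter> B" by blast
      moreover then have "u \<noteq> w" by (auto simp: A_def)
      ultimately show False using Kc noE unfolding is_clique_def by blast
    qed
    then show ?thesis
    proof
      assume KA: "K \<inter> A = {}"
      have d: "A \<inter> S = {}" "A \<inter> B = {}" "S \<inter> B = {}" by (auto simp: A_def S_def)
      show ?thesis
        by (rule sep[of A S B, OF VU d _ _ noE Sc KA]) (use aA bB in auto)
    next
      assume KB: "K \<inter> B = {}"
      have d: "B \<inter> S = {}" "B \<inter> A = {}" "S \<inter> A = {}" by (auto simp: A_def S_def)
      have VU': "V = B \<union> S \<union> A" using VU by blast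
      have noE': "\<forall>u\<in>B. \<forall>w\<in>A. \<not> E u w" using noE sym by blast
      show ?thesis
        by (rule sep[of B S A, OF VU' d _ _ noE' Sc KB]) (use aA bB in auto)
    qed
  qed
qed




lemma peo_exists:
  assumes "graph V E" "chordal V E" "distinct ks" "set ks \<subseteq> V" "is_clique E (set ks)"
  shows "\<exists>\<sigma>. peo V E \<sigma> \<and> (\<forall>i<length ks. \<sigma> (Suc i) = ks ! i)"
  using assms
proof (induction "card V" arbitrary: V E rule: less_induct)
  case less
  note g = less.prems(1) and ch = less.prems(2) and dk = less.prems(3) and kV = less.prems(4)
    and kc = less.prems(5)
  have fin: "finite V" using g unfolding graph_def by blast
  show ?case
  proof (cases "set ks = V")
    case True
    define \<sigma> where "\<sigma> = (\<lambda>i. ks ! (i - 1))"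
    have cV: "card V = length ks" using True dk distinct_card by fastforce
    have inj: "inj_on \<sigma> {1..card V}"
    proof (rule inj_onI)
      fix i j assume "i \<in> {1..card V}" "j \<in> {1..card V}" "\<sigma> i = \<sigma> j"
      then have "i - 1 = j - 1" using dk cV nth_eq_iff_index_eq[OF dk, of "i - 1" "j - 1"]
        unfolding \<sigma>_def by auto
      then show "i = j" using \<open>i \<in> _\<close> \<open>j \<in> _\<close> by auto
    qed
    have img: "\<sigma> ` {1..card V} = V"
    proof
      show "\<sigma> ` {1..card V} \<subseteq> V" using True cV unfolding \<sigma>_def by auto
    next
      show "V \<subseteq> \<sigma> ` {1..card V}"
      proof
        fix v assume "v \<in> V"
        then obtain t where t: "t < length ks" "ks ! t = v" using True by (auto simp: in_set_conv_nth)
        then have "\<sigma> (Suc t) = v" "Suc t \<in> {1..card V}" using cV unfolding \<sigma>_def by auto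
        then show "v \<in> \<sigma> ` {1..card V}" by (metis imageI)
      qed
    qed
    have Vc: "is_clique E V" using kc True by simp
    have "peo V E \<sigma>" unfolding peo_def vertex_ordering_def bij_betw_def
    proof (intro conjI ballI inj img)
      fix i assume "i \<in> {1..card V}"
      show "is_clique E {\<sigma> j |j. j \<in> {1..card V} \<and> j < i \<and> E (\<sigma> i) (\<sigma> j)}"
        by (rule clique_subset[OF Vc]) (use img in auto)
    qed
    moreover have "\<forall>i<length ks. \<sigma> (Suc i) = ks ! i" unfolding \<sigma>_def by simp
    ultimately show ?thesis by blast
  next
    case False
    obtain x where x: "x \<in> V - set ks" "is_clique E (nbhd E x)"
      using simplicial_exists[OF g ch kc kV False] by blast
    define W where "W = V - {x}"
    define N where "N = card V"
    have WV: "W \<subseteq> V" unfolding W_def by blast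
    have cW: "card W = N - 1" unfolding W_def N_def using x fin by simp
    have N1: "N \<ge> 1" unfolding N_def using x fin card_0_eq by fastforce
    have cWl: "card W < card V" using cW N1 N_def by simp
    have kW: "set ks \<subseteq> W" using kV x unfolding W_def by blast
    have kcW: "is_clique (res W E) (set ks)" using kc kW unfolding is_clique_def res_def by blast
    obtain \<sigma>' where s': "peo W (res W E) \<sigma>'" "\<forall>i<length ks. \<sigma>' (Suc i) = ks ! i"
      using less.hyps[OF cWl graph_res[OF g WV] chordal_res[OF ch WV] dk kW kcW] by blast
    have bij': "bij_betw \<sigma>' {1..N-1} W" using s'(1) cW unfolding peo_def vertex_ordering_def by simp
    have inj': "inj_on \<sigma>' {1..N-1}" and img': "\<sigma>' ` {1..N-1} = W"
      using bij' unfolding bij_betw_def by auto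
    have cl': "is_clique (res W E) {\<sigma>' j |j. j \<in> {1..N-1} \<and> j < i \<and> res W E (\<sigma>' i) (\<sigma>' j)}"
      if "i \<in> {1..N-1}" for i using s'(1) that cW unfolding peo_def by simp
    define \<sigma> where "\<sigma> = \<sigma>'(N := x)"
    have sl: "\<sigma> j = \<sigma>' j" if "j < N" for j using that unfolding \<sigma>_def by simp
    have xW: "x \<notin> W" unfolding W_def by simp
    have inj: "inj_on \<sigma> {1..N}"
    proof (rule inj_onI)
      fix i j assume i: "i \<in> {1..N}" and j: "j \<in> {1..N}" and e: "\<sigma> i = \<sigma> j"
      show "i = j"
      proof (cases "i = N"; cases "j = N")
        assume "i = N" "j \<noteq> N"
        then have "\<sigma> j \<in> W" using j img' sl[of j] by auto
        then show ?thesis using e \<open>i = N\<close> xW unfolding \<sigma>_def by simp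
      next
        assume "i \<noteq> N" "j = N"
        then have "\<sigma> i \<in> W" using i img' sl[of i] by auto
        then show ?thesis using e \<open>j = N\<close> xW unfolding \<sigma>_def by simp
      next
        assume "i \<noteq> N" "j \<noteq> N"
        then show ?thesis using i j e sl[of i] sl[of j] inj' unfolding inj_on_def by auto
      qed simp
    qed
    have img: "\<sigma> ` {1..N} = V"
    proof -
      have e: "{1..N} = insert N {1..N-1}" using N1 by auto
      have "\<sigma> ` {1..N} = insert (\<sigma> N) (\<sigma> ` {1..N-1})" by (subst e) (rule image_insert)
      then have "\<sigma> ` {1..N} = insert x (\<sigma> ` {1..N-1})" unfolding \<sigma>_def by simp
      also have "\<sigma> ` {1..N-1} = \<sigma>' ` {1..N-1}" using sl N1 by (intro image_cong) auto
      finally show ?thesis using img' x unfolding W_def by auto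
    qed
    have "peo V E \<sigma>" unfolding peo_def vertex_ordering_def bij_betw_def N_def[symmetric]
    proof (intro conjI ballI inj img)
      fix i assume i: "i \<in> {1..N}"
      show "is_clique E {\<sigma> j |j. j \<in> {1..N} \<and> j < i \<and> E (\<sigma> i) (\<sigma> j)}"
      proof (cases "i = N")
        case True
        show ?thesis
          by (rule clique_subset[OF x(2)]) (auto simp: nbhd_def True \<sigma>_def)
      next
        case False
        then have iN: "i \<in> {1..N-1}" "i < N" using i by auto
        have sub: "{\<sigma> j |j. j \<in> {1..N} \<and> j < i \<and> E (\<sigma> i) (\<sigma> j)} \<subseteq>
              {\<sigma>' j |j. j \<in> {1..N-1} \<and> j < i \<and> res W E (\<sigma>' i) (\<sigma>' j)}"
        proof
          fix u assume "u \<in> {\<sigma> j |j. j \<in> {1..N} \<and> j < i \<and> E (\<sigma> i) (\<sigma> j)}"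
          then obtain j where j: "u = \<sigma> j" "j \<in> {1..N}" "j < i" "E (\<sigma> i) (\<sigma> j)" by blast
          have "j \<in> {1..N-1}" using j iN by auto
          moreover have "\<sigma>' i \<in> W" "\<sigma>' j \<in> W" using img' iN \<open>j \<in> {1..N-1}\<close> by auto
          ultimately show "u \<in> {\<sigma>' j |j. j \<in> {1..N-1} \<and> j < i \<and> res W E (\<sigma>' i) (\<sigma>' j)}"
            using j sl[of i] sl[of j] iN unfolding res_def by auto
        qed
        have "is_clique E {\<sigma>' j |j. j \<in> {1..N-1} \<and> j < i \<and> res W E (\<sigma>' i) (\<sigma>' j)}"
          using cl'[OF iN(1)] unfolding is_clique_def res_def by blast
        then show ?thesis using sub clique_subset by blast
      qed
    qed
    moreover have "\<forall>i<length ks. \<sigma> (Suc i) = ks ! i"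
    proof (intro allI impI)
      fix i assume "i < length ks"
      moreover have "length ks \<le> card W" using kW fin WV dk distinct_card card_mono
        by (metis finite_subset)
      ultimately have "Suc i < N" using cW N1 by linarith
      then show "\<sigma> (Suc i) = ks ! i" using sl s'(2) \<open>i < length ks\<close> by simp
    qed
    ultimately show ?thesis by blast
  qed
qed

lemma left_nbr:
  assumes g: "graph V E" and c: "connected_graph V E" and p: "peo V E \<sigma>"
    and i2: "2 \<le> i" and iN: "i \<le> card V"
  shows "\<exists>j. 1 \<le> j \<and> j < i \<and> E (\<sigma> i) (\<sigma> j)"
proof (rule ccontr)
  assume nl0: "\<not> ?thesis"
  then have nl: "\<And>j. 1 \<le> j \<Longrightarrow> j < i \<Longrightarrow> \<not> E (\<sigma> i) (\<sigma> j)" by blast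
  define N where "N = card V"
  have sym: "E u w \<Longrightarrow> E w u" for u w using g unfolding graph_def by blast
  have inV: "E u w \<Longrightarrow> u \<in> V \<and> w \<in> V" for u w using g unfolding graph_def by blast
  have bij: "bij_betw \<sigma> {1..N} V" using p unfolding peo_def vertex_ordering_def N_def by simp
  have inj: "inj_on \<sigma> {1..N}" and img: "\<sigma> ` {1..N} = V" using bij unfolding bij_betw_def by auto
  have cl: "is_clique E {\<sigma> j |j. j \<in> {1..N} \<and> j < k \<and> E (\<sigma> k) (\<sigma> j)}"
    if "k \<in> {1..N}" for k using p that unfolding peo_def N_def by simp
  have key: "\<forall>r. r 0 = i \<longrightarrow> r n < i \<longrightarrow> (\<forall>m\<le>n. r m \<in> {1..N}) \<longrightarrow>
      (\<forall>m<n. r m = r (Suc m) \<or> E (\<sigma> (r m)) (\<sigma> (r (Suc m)))) \<longrightarrow> False" for n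
  proof (induction n rule: less_induct)
    case (less n)
    show ?case
    proof (intro allI impI)
      fix r assume r0: "r 0 = i" and rn: "r n < i" and rb: "\<forall>m\<le>n. r m \<in> {1..N}"
        and st: "\<forall>m<n. r m = r (Suc m) \<or> E (\<sigma> (r m)) (\<sigma> (r (Suc m)))"
      define M where "M = Max (r ` {..n})"
      have Mge: "r m \<le> M" if "m \<le> n" for m unfolding M_def using that by (intro Max_ge) auto
      have Mi: "i \<le> M" using Mge[of 0] r0 by simp
      show False
      proof (cases "M = i")
        case True
        have ex: "\<exists>m. r m \<noteq> i" using rn by auto
        define f where "f = (LEAST m. r m \<noteq> i)"
        have rf: "r f \<noteq> i" unfolding f_def by (rule LeastI_ex[OF ex])
        have fn: "f \<le> n" unfolding f_def using rn by (intro Least_le) simp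
        have f0: "f \<noteq> 0" using rf r0 by (metis)
        have rf1: "r (f - 1) = i" using not_less_Least[of "f - 1" "\<lambda>m. r m \<noteq> i"] f0 unfolding f_def by auto
        have "E (\<sigma> (r (f - 1))) (\<sigma> (r (Suc (f - 1))))" using st[rule_format, of "f - 1"] fn f0 rf rf1 by auto
        then have "E (\<sigma> i) (\<sigma> (r f))" using rf1 f0 by simp
        moreover have "r f < i" using Mge[OF fn] True rf by simp
        moreover have "1 \<le> r f" using rb fn by auto
        ultimately show False using nl by blast
      next
        case False
        then have Mi': "i < M" using Mi by simp
        have "M \<in> r ` {..n}" unfolding M_def by (rule Max_in) auto
        then obtain m where m: "m \<le> n" "r m = M" by auto
        have m0: "m \<noteq> 0" using m r0 Mi' by (cases "m = 0") auto
        have mn: "m < n" using m rn Mi' by (cases "m = n") auto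
        define r' where "r' = (\<lambda>t. if t < m then r t else r (Suc t))"
        have step_m: "r (m - 1) = r (Suc m) \<or> E (\<sigma> (r (m - 1))) (\<sigma> (r (Suc m)))"
        proof -
          define a b c where "a = r (m - 1)" and "b = r (Suc m)" and "c = r m"
          have s1: "a = c \<or> E (\<sigma> a) (\<sigma> c)" using st[rule_format, of "m - 1"] m0 mn
            unfolding a_def c_def by simp
          have s2: "c = b \<or> E (\<sigma> c) (\<sigma> b)" using st[rule_format, of m] mn
            unfolding b_def c_def by simp
          have "a = b \<or> E (\<sigma> a) (\<sigma> b)"
          proof (cases "a = c \<or> c = b")
            case True then show ?thesis using s1 s2 by auto
          next
            case False
            then have e1: "E (\<sigma> c) (\<sigma> a)" and e2: "E (\<sigma> c) (\<sigma> b)" using s1 s2 sym by auto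
            have ab: "a \<in> {1..N}" "b \<in> {1..N}" "c \<in> {1..N}" using rb m0 mn m(1)
              unfolding a_def b_def c_def by auto
            have "a \<le> M" "b \<le> M" using Mge[of "m - 1"] Mge[of "Suc m"] mn unfolding a_def b_def by auto
            then have lt: "a < c" "b < c" using False m(2) unfolding c_def by auto
            show ?thesis
            proof (cases "a = b")
              case False
              then have "\<sigma> a \<noteq> \<sigma> b" using inj ab unfolding inj_on_def by blast
              moreover have "\<sigma> a \<in> {\<sigma> j |j. j \<in> {1..N} \<and> j < c \<and> E (\<sigma> c) (\<sigma> j)}"
                using ab lt e1 by blast
              moreover have "\<sigma> b \<in> {\<sigma> j |j. j \<in> {1..N} \<and> j < c \<and> E (\<sigma> c) (\<sigma> j)}"
                using ab lt e2 by blast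
              ultimately show ?thesis using cl[OF ab(3)] unfolding is_clique_def by blast
            qed simp
          qed
          then show ?thesis unfolding a_def b_def by simp
        qed
        have "False"
        proof (rule less.IH[rule_format, of "n - 1" r'])
          show "n - 1 < n" using mn by simp
          show "r' 0 = i" using m0 r0 unfolding r'_def by simp
          have "\<not> n - 1 < m" "Suc (n - 1) = n" using mn by linarith+
          then show "r' (n - 1) < i" using rn unfolding r'_def by simp
          show "r' t \<in> {1..N}" if "t \<le> n - 1" for t using rb mn that unfolding r'_def by auto
          show "r' t = r' (Suc t) \<or> E (\<sigma> (r' t)) (\<sigma> (r' (Suc t)))" if t: "t < n - 1" for t
          proof -
            consider "Suc t < m" | "Suc t = m" | "t \<ge> m" by linarith
            then show "r' t = r' (Suc t) \<or> E (\<sigma> (r' t)) (\<sigma> (r' (Suc t)))"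
            proof cases
              case 1 then show ?thesis using st[rule_format, of t] mn unfolding r'_def by simp
            next
              case 2 then show ?thesis using step_m unfolding r'_def by auto
            next
              case 3 then show ?thesis using st[rule_format, of "Suc t"] t unfolding r'_def by simp
            qed
          qed
        qed
        then show False .
      qed
    qed
  qed
  have "\<sigma> i \<in> V" "\<sigma> 1 \<in> V" using img i2 iN N_def by auto
  then have "E\<^sup>*\<^sup>* (\<sigma> i) (\<sigma> 1)" using c unfolding connected_graph_def by blast
  then obtain n q where q: "q 0 = \<sigma> i" "q n = \<sigma> 1" "\<forall>m<n. E (q m) (q (Suc m))"
    using walk_of_rtranclp[of E "\<sigma> i" "\<sigma> 1"] by blast
  have qV: "q m \<in> V" if "m \<le> n" for m
  proof (cases "m < n")
    case True then show ?thesis using q(3) inV by blast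
  next
    case False then show ?thesis using that q(2) \<open>\<sigma> 1 \<in> V\<close> by auto
  qed
  define r where "r = (\<lambda>m. the_inv_into {1..N} \<sigma> (q m))"
  have rb: "r m \<in> {1..N}" and rs: "\<sigma> (r m) = q m" if "m \<le> n" for m
  proof -
    have "q m \<in> \<sigma> ` {1..N}" using qV[OF that] img by simp
    then show "r m \<in> {1..N}" "\<sigma> (r m) = q m"
      using the_inv_into_into[OF inj _ subset_refl] f_the_inv_into_f[OF inj] unfolding r_def by auto
  qed
  have r0: "r 0 = i" unfolding r_def using q(1) the_inv_into_f_f[OF inj, of i] i2 iN N_def by auto
  have rn: "r n = 1" unfolding r_def using q(2) the_inv_into_f_f[OF inj, of 1] i2 iN N_def by auto
  show False
  proof (rule key[rule_format, of r n])
    show "r 0 = i" by (rule r0)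
    show "r n < i" using rn i2 by simp
    show "r m \<in> {1..N}" if "m \<le> n" for m using rb that by blast
    show "r m = r (Suc m) \<or> E (\<sigma> (r m)) (\<sigma> (r (Suc m)))" if "m < n" for m
      using q(3) rs that by simp
  qed
qed




lemma least_props:
  fixes j N :: nat
  assumes "j \<in> {1..N}" "E w (\<sigma> j)"
  shows "(LEAST j. j \<in> {1..N} \<and> E w (\<sigma> j)) \<in> {1..N}"
    "E w (\<sigma> (LEAST j. j \<in> {1..N} \<and> E w (\<sigma> j)))"
    "(LEAST j. j \<in> {1..N} \<and> E w (\<sigma> j)) \<le> j"
  using LeastI[of "\<lambda>j. j \<in> {1..N} \<and> E w (\<sigma> j)" j] Least_le[of "\<lambda>j. j \<in> {1..N} \<and> E w (\<sigma> j)" j] assms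
  by auto

lemma in_F_tree: "w \<in> V \<Longrightarrow> w \<noteq> \<sigma> 1 \<Longrightarrow> {w, leftmost_nbr V E \<sigma> w} \<in> F_tree_edges V E \<sigma>"
  unfolding F_tree_edges_def by blast

theorem theorem10:
  fixes V :: "'a set" and E :: "'a \<Rightarrow> 'a \<Rightarrow> bool" and v :: 'a
  assumes "graph V E" and "connected_graph V E" and "chordal V E"
    and "card V \<ge> 2" and "v \<in> V"
  shows "(\<exists>\<sigma>. peo V E \<sigma> \<and> F_branch_leaf V E \<sigma> v) \<longleftrightarrow>
         has_dominating_clique (nbhd E v) E"
proof -
  note g = assms(1) and con = assms(2) and ch = assms(3) and c2 = assms(4) and vV = assms(5)
  define N where "N = card V"
  have fin: "finite V" using g unfolding graph_def by blast
  have sym: "E u w \<Longrightarrow> E w u" for u w using g unfolding graph_def by blast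
  have irr: "\<not> E u u" for u using g unfolding graph_def by blast
  have inV: "E u w \<Longrightarrow> u \<in> V \<and> w \<in> V" for u w using g unfolding graph_def by blast
  have lm: "leftmost_nbr V E \<sigma> w = \<sigma> (LEAST j. j \<in> {1..N} \<and> E w (\<sigma> j))" for \<sigma> w
    unfolding leftmost_nbr_def N_def by simp
  show ?thesis
  proof
    assume "\<exists>\<sigma>. peo V E \<sigma> \<and> F_branch_leaf V E \<sigma> v"
    then obtain \<sigma> where p: "peo V E \<sigma>" and leaf: "F_branch_leaf V E \<sigma> v" by blast
    have bij: "bij_betw \<sigma> {1..N} V" using p unfolding peo_def vertex_ordering_def N_def by simp
    have inj: "inj_on \<sigma> {1..N}" and img: "\<sigma> ` {1..N} = V" using bij unfolding bij_betw_def by auto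
    have cl: "is_clique E {\<sigma> j |j. j \<in> {1..N} \<and> j < k \<and> E (\<sigma> k) (\<sigma> j)}"
      if "k \<in> {1..N}" for k using p that unfolding peo_def N_def by simp
    have v1: "v \<noteq> \<sigma> 1" and cS: "card {e \<in> F_tree_edges V E \<sigma>. v \<in> e} = 1"
      using leaf unfolding F_branch_leaf_def by auto
    obtain i0 where i0: "i0 \<in> {1..N}" "\<sigma> i0 = v" using vV img by (metis imageE)
    have i02: "i0 \<ge> 2" using i0 v1 by (cases "i0 = 1") auto
    define C where "C = {\<sigma> j |j. j \<in> {1..N} \<and> j < i0 \<and> E (\<sigma> i0) (\<sigma> j)}"
    have "dominating_clique (nbhd E v) E C"
      unfolding dominating_clique_def
    proof (intro conjI ballI)
      show "C \<subseteq> nbhd E v" unfolding C_def nbhd_def using i0 by auto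
      show "is_clique E C" unfolding C_def by (rule cl[OF i0(1)])
    next
      fix u assume "u \<in> nbhd E v"
      then have vu: "E v u" unfolding nbhd_def by simp
      then have "u \<in> V" using inV by blast
      then obtain iu where iu: "iu \<in> {1..N}" "\<sigma> iu = u" using img by (metis imageE)
      consider "iu < i0" | "iu = i0" | "i0 < iu" by linarith
      then show "u \<in> C \<or> (\<exists>c\<in>C. E u c)"
      proof cases
        case 1 then show ?thesis using iu i0 vu unfolding C_def by auto
      next
        case 2 then show ?thesis using iu i0 vu irr by auto
      next
        case 3
        define Lu where "Lu = (LEAST j. j \<in> {1..N} \<and> E u (\<sigma> j))"
        have uv: "E u (\<sigma> i0)" using sym[OF vu] i0 by simp
        have Lu: "Lu \<in> {1..N}" "E u (\<sigma> Lu)" "Lu \<le> i0"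
          using least_props[of i0 N E u \<sigma>, OF i0(1) uv] unfolding Lu_def by auto
        have "Lu \<noteq> i0"
        proof
          assume "Lu = i0"
          then have lu: "leftmost_nbr V E \<sigma> u = v" using lm[of \<sigma> u] i0 unfolding Lu_def by simp
          have "u \<noteq> \<sigma> 1"
          proof
            assume "u = \<sigma> 1"
            moreover have "(1::nat) \<in> {1..N}" using iu by auto
            ultimately have "iu = 1" using inj iu unfolding inj_on_def by blast
            then show False using 3 i02 by simp
          qed
          then have "{u, v} \<in> F_tree_edges V E \<sigma>" using in_F_tree[where E=E and \<sigma>=\<sigma>, OF \<open>u \<in> V\<close>] lu by metis
          then have e1: "{u, v} \<in> {e \<in> F_tree_edges V E \<sigma>. v \<in> e}" by simp
          have e2: "{v, leftmost_nbr V E \<sigma> v} \<in> {e \<in> F_tree_edges V E \<sigma>. v \<in> e}"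
            using in_F_tree[where E=E and \<sigma>=\<sigma>, OF vV v1] by simp
          from cS obtain e0 where "{e \<in> F_tree_edges V E \<sigma>. v \<in> e} = {e0}" by (rule card_1_singletonE)
          then have "{u, v} = {v, leftmost_nbr V E \<sigma> v}" using e1 e2 by simp
          moreover have "u \<noteq> v" using vu irr by metis
          ultimately have lvu: "leftmost_nbr V E \<sigma> v = u" by (auto simp: doubleton_eq_iff)
          obtain j where j: "1 \<le> j" "j < i0" "E (\<sigma> i0) (\<sigma> j)"
            using left_nbr[OF g con p i02] i0 N_def by auto
          have jN: "j \<in> {1..N}" using j i0 by auto
          define Lv where "Lv = (LEAST j. j \<in> {1..N} \<and> E v (\<sigma> j))"
          have Lv: "Lv \<in> {1..N}" "Lv \<le> j" using least_props[of j N E v \<sigma>, OF jN] j i0 unfolding Lv_def by auto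
          have "\<sigma> Lv = \<sigma> iu" using lvu lm[of \<sigma> v] iu unfolding Lv_def by simp
          then have "Lv = iu" using inj Lv(1) iu(1) unfolding inj_on_def by blast
          then show False using Lv j 3 by simp
        qed
        then have Lu0: "Lu < i0" using Lu by simp
        have "\<sigma> Lu \<in> {\<sigma> j |j. j \<in> {1..N} \<and> j < iu \<and> E (\<sigma> iu) (\<sigma> j)}"
          using Lu Lu0 3 iu by auto
        moreover have "\<sigma> i0 \<in> {\<sigma> j |j. j \<in> {1..N} \<and> j < iu \<and> E (\<sigma> iu) (\<sigma> j)}"
          using i0 3 iu uv by auto
        moreover have "\<sigma> Lu \<noteq> \<sigma> i0" using inj Lu(1) i0(1) \<open>Lu \<noteq> i0\<close> unfolding inj_on_def by blast
        ultimately have "E (\<sigma> Lu) (\<sigma> i0)" using cl[OF iu(1)] unfolding is_clique_def by blast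
        then have "\<sigma> Lu \<in> C" using Lu Lu0 sym unfolding C_def by blast
        then show ?thesis using Lu(2) iu by auto
      qed
    qed
    then show "has_dominating_clique (nbhd E v) E" unfolding has_dominating_clique_def by blast
  next
    assume "has_dominating_clique (nbhd E v) E"
    then obtain C where dc: "dominating_clique (nbhd E v) E C" unfolding has_dominating_clique_def by blast
    have Cn: "C \<subseteq> nbhd E v" and Cc: "is_clique E C" and dom: "\<forall>w\<in>nbhd E v. w \<in> C \<or> (\<exists>c\<in>C. E w c)"
      using dc unfolding dominating_clique_def by auto
    have hasnb: "\<exists>z. E w z" if "w \<in> V" for w
    proof -
      have "\<exists>w'\<in>V. w' \<noteq> w"
      proof (rule ccontr)
        assume "\<not> ?thesis"
        then have "V \<subseteq> {w}" by blast
        then have "card V \<le> 1" using card_mono[of "{w}" V] by simp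
        then show False using c2 by simp
      qed
      then obtain w' where "w' \<in> V" "w' \<noteq> w" by blast
      then have "E\<^sup>*\<^sup>* w w'" using con that unfolding connected_graph_def by blast
      then show ?thesis using \<open>w' \<noteq> w\<close> by (cases rule: converse_rtranclpE) auto
    qed
    have CV: "C \<subseteq> V" using Cn inV unfolding nbhd_def by blast
    have vC: "v \<notin> C" using Cn irr unfolding nbhd_def by blast
    have Cne: "C \<noteq> {}"
    proof -
      obtain z where "E v z" using hasnb[OF vV] by blast
      then show ?thesis using dom unfolding nbhd_def by blast
    qed
    obtain cl where cl: "set cl = C" "distinct cl" using finite_distinct_list[OF finite_subset[OF CV fin]] by blast
    define ks where "ks = cl @ [v]"
    have ksd: "distinct ks" using cl vC unfolding ks_def by simp
    have ksV: "set ks \<subseteq> V" using CV vV cl unfolding ks_def by simp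
    have ksc: "is_clique E (set ks)"
      unfolding is_clique_def
    proof (intro ballI impI)
      fix x y assume "x \<in> set ks" "y \<in> set ks" "x \<noteq> y"
      then consider "x \<in> C" "y \<in> C" | "x = v" "y \<in> C" | "x \<in> C" "y = v"
        using cl unfolding ks_def by auto
      then show "E x y"
      proof cases
        case 1 then show ?thesis using Cc \<open>x \<noteq> y\<close> unfolding is_clique_def by blast
      next
        case 2 then show ?thesis using Cn unfolding nbhd_def by blast
      next
        case 3 then show ?thesis using Cn sym unfolding nbhd_def by blast
      qed
    qed
    obtain \<sigma> where p: "peo V E \<sigma>" and pre: "\<forall>i<length ks. \<sigma> (Suc i) = ks ! i"
      using peo_exists[OF g ch ksd ksV ksc] by blast
    have bij: "bij_betw \<sigma> {1..N} V" using p unfolding peo_def vertex_ordering_def N_def by simp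
    have inj: "inj_on \<sigma> {1..N}" and img: "\<sigma> ` {1..N} = V" using bij unfolding bij_betw_def by auto
    define c where "c = length cl"
    have lks: "length ks \<le> N"
    proof -
      have "length ks = card (set ks)" using distinct_card[OF ksd] by simp
      also have "\<dots> \<le> card V" using card_mono[OF fin ksV] .
      finally show ?thesis unfolding N_def .
    qed
    have sv: "\<sigma> (Suc c) = v" using pre unfolding ks_def c_def by (simp add: nth_append)
    have sC: "\<sigma> (Suc t) \<in> C" if "t < c" for t
      using pre that cl unfolding ks_def c_def by (auto simp: nth_append)
    have scN: "Suc c \<le> N" using lks unfolding ks_def c_def by simp
    have c1: "c \<ge> 1" using Cne cl unfolding c_def by (cases cl) auto
    have s1C: "\<sigma> 1 \<in> C" using sC[of 0] c1 by simp
    have v1: "v \<noteq> \<sigma> 1" using s1C vC by blast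
    have "{e \<in> F_tree_edges V E \<sigma>. v \<in> e} = {{v, leftmost_nbr V E \<sigma> v}}"
    proof
      show "{{v, leftmost_nbr V E \<sigma> v}} \<subseteq> {e \<in> F_tree_edges V E \<sigma>. v \<in> e}"
        using in_F_tree[where E=E and \<sigma>=\<sigma>, OF vV v1] by simp
    next
      show "{e \<in> F_tree_edges V E \<sigma>. v \<in> e} \<subseteq> {{v, leftmost_nbr V E \<sigma> v}}"
      proof
        fix e assume "e \<in> {e \<in> F_tree_edges V E \<sigma>. v \<in> e}"
        then obtain w where w: "e = {w, leftmost_nbr V E \<sigma> w}" "w \<in> V" "w \<noteq> \<sigma> 1" "v \<in> e"
          unfolding F_tree_edges_def by blast
        show "e \<in> {{v, leftmost_nbr V E \<sigma> v}}"
        proof (cases "w = v")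
          case True then show ?thesis using w by simp
        next
          case False
          then have lw: "leftmost_nbr V E \<sigma> w = v" using w by auto
          obtain z where "E w z" using hasnb[OF w(2)] by blast
          then obtain jz where jz: "jz \<in> {1..N}" "E w (\<sigma> jz)" using img inV by (metis imageE)
          define Lw where "Lw = (LEAST j. j \<in> {1..N} \<and> E w (\<sigma> j))"
          have Lw: "Lw \<in> {1..N}" "E w (\<sigma> Lw)" using least_props[of jz N E w \<sigma>, OF jz] unfolding Lw_def by auto
          have sLw: "\<sigma> Lw = v" using lw lm[of \<sigma> w] unfolding Lw_def by simp
          have wv: "E v w" using sym[OF Lw(2)] sLw by simp
          show ?thesis
          proof (cases "w \<in> C")
            case True
            have "E w (\<sigma> 1)" using Cc True s1C w(3) unfolding is_clique_def by blast
            moreover have "1 \<in> {1..N}" using scN by simp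
            ultimately have "Lw \<le> 1" using least_props[of 1 N E w \<sigma>] unfolding Lw_def by auto
            then have "Lw = 1" using Lw by simp
            then show ?thesis using sLw v1 by simp
          next
            case False
            then obtain c0 where c0: "c0 \<in> C" "E w c0" using dom wv unfolding nbhd_def by blast
            then obtain t where t: "t < c" "cl ! t = c0" using cl unfolding c_def by (auto simp: in_set_conv_nth)
            have "\<sigma> (Suc t) = c0" using pre t unfolding ks_def c_def by (simp add: nth_append)
            moreover have "Suc t \<in> {1..N}" using t scN by simp
            ultimately have "Lw \<le> Suc t" using least_props[of "Suc t" N E w \<sigma>] c0 unfolding Lw_def by auto
            moreover have "Lw = Suc c"
            proof -
              have "\<sigma> Lw = \<sigma> (Suc c)" using sLw sv by simp
              moreover have "Suc c \<in> {1..N}" using scN by simp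
              ultimately show ?thesis using inj_onD[OF inj _ Lw(1)] by blast
            qed
            ultimately show ?thesis using t by simp
          qed
        qed
      qed
    qed
    then have "card {e \<in> F_tree_edges V E \<sigma>. v \<in> e} = 1" by simp
    then have "F_branch_leaf V E \<sigma> v" using vV v1 unfolding F_branch_leaf_def by simp
    then show "\<exists>\<sigma>. peo V E \<sigma> \<and> F_branch_leaf V E \<sigma> v" using p by blast
  qed
qed


end
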